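(* Let $K\ge1$, let $\pi$ be a probability distribution on $\mathbb{X}$ and $\tau(\mathrm{d}h\mid x)$ hold-time distributions on $(0,\infty)$ with survival function $\bar F_\tau(h\mid x)$, such that $H>\epsilon$ almost surely under each $\tau(\cdot\mid x)$ for a fixed $\epsilon>0$ and $\sup_x\mathbb{E}_\tau[H\mid x]<\infty$. Let $(X^{1:K+1},L)$ be distributed according to \[ A(\mathrm{d}x^{1:K+1},\mathrm{d}l)=\frac{\bar F_{\tau}(l\mid x^{K+1})}{\mathbb{E}_{\tau}[H]}\,\mathrm{d}l\prod_{k=1}^{K+1}\pi(\mathrm{d}x^{k}),\qquad l\ge0, \] with $\mathbb{E}_{\tau}[H]=\int\mathbb{E}_{\tau}[H\mid x]\pi(\mathrm{d}x)$. Then the conditional distribution of $X^{1:K+1}$ given $L<\epsilon$ is $\Pi(\mathrm{d}x^{1:K+1})=\prod_{k=1}^{K+1}\pi(\mathrm{d}x^k)$.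
   Context: $A$ is the stationary distribution of the real-time Markov jump process of $K+1$ Markov chains (each with invariant distribution $\pi$) simulated serially on one processor, where the chain being simulated has state $x^{K+1}$, a transition from state $x$ takes real time distributed as $\tau(\cdot\mid x)$, states are rotated after each transition, and $L$ is the time elapsed since the last transition. *)

theory Defs
  imports "HOL-Probability.Probability"
begin

definition surv :: "('a \<Rightarrow> real measure) \<Rightarrow> 'a \<Rightarrow> real \<Rightarrow> real" where
  "surv \<tau> x h = measure (\<tau> x) {h'. h' > h}"

definition mean_hold :: "'a measure \<Rightarrow> ('a \<Rightarrow> real measure) \<Rightarrow> ennreal" where
  "mean_hold \<pi> \<tau> = (\<integral>\<^sup>+ x. (\<integral>\<^sup>+ h. ennreal h \<partial>\<tau> x) \<partial>\<pi>)"

definition Pi_target :: "'a measure \<Rightarrow> nat \<Rightarrow> (nat \<Rightarrow> 'a) measure" where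
  "Pi_target \<pi> K = PiM {1..K+1} (\<lambda>_. \<pi>)"

definition A_meas :: "'a measure \<Rightarrow> ('a \<Rightarrow> real measure) \<Rightarrow> nat \<Rightarrow> ((nat \<Rightarrow> 'a) \<times> real) measure" where
  "A_meas \<pi> \<tau> K = density (Pi_target \<pi> K \<Otimes>\<^sub>M lborel)
     (\<lambda>(xs, l). indicator {0..} l * ennreal (surv \<tau> (xs (K+1)) l) / mean_hold \<pi> \<tau>)"

end

theory Submission
  imports Defs
begin

theorem corollary7:
  fixes \<pi> :: "'a measure" and \<tau> :: "'a \<Rightarrow> real measure" and K :: nat and \<epsilon> :: real
  assumes "K \<ge> 1"
    and "prob_space \<pi>"
    and "\<tau> \<in> \<pi> \<rightarrow>\<^sub>M prob_algebra borel"
    and "\<epsilon> > 0"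
    and "\<forall>x\<in>space \<pi>. AE h in \<tau> x. h > \<epsilon>"
    and "(SUP x\<in>space \<pi>. \<integral>\<^sup>+ h. ennreal h \<partial>\<tau> x) < \<infinity>"
  shows "measure (A_meas \<pi> \<tau> K) (space (Pi_target \<pi> K) \<times> {..<\<epsilon>}) > 0
    \<and> (\<forall>S \<in> sets (Pi_target \<pi> K).
         measure (A_meas \<pi> \<tau> K) (S \<times> {..<\<epsilon>}) / measure (A_meas \<pi> \<tau> K) (space (Pi_target \<pi> K) \<times> {..<\<epsilon>})
         = measure (Pi_target \<pi> K) S)"
proof -
  interpret P: prob_space \<pi> by fact
  let ?P = "Pi_target \<pi> K"
  have PP: "prob_space ?P" unfolding Pi_target_def
    by (intro prob_space_PiM) (auto intro: assms(2))
  interpret PP: prob_space ?P by fact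
  have tx: "prob_space (\<tau> x) \<and> sets (\<tau> x) = sets borel" if "x \<in> space \<pi>" for x
    using measurable_space[OF assms(3) that] by (simp add: space_prob_algebra)
  have sp: "space (\<tau> x) = UNIV" if "x \<in> space \<pi>" for x
    using tx[OF that] sets_eq_imp_space_eq by fastforce
  define c where "c = mean_hold \<pi> \<tau>"
  have inner: "ennreal \<epsilon> \<le> (\<integral>\<^sup>+ h. ennreal h \<partial>\<tau> x)" if x: "x \<in> space \<pi>" for x
  proof -
    interpret T: prob_space "\<tau> x" using tx[OF x] by blast
    have "(\<integral>\<^sup>+ h. ennreal \<epsilon> \<partial>\<tau> x) \<le> (\<integral>\<^sup>+ h. ennreal h \<partial>\<tau> x)"
    proof (intro nn_integral_mono_AE)
      have "AE h in \<tau> x. h > \<epsilon>" using assms(5) x by blast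
      thus "AE h in \<tau> x. ennreal \<epsilon> \<le> ennreal h" by (rule eventually_mono) (simp add: ennreal_leI)
    qed
    thus ?thesis by (simp add: T.emeasure_space_1)
  qed
  have c_ge: "ennreal \<epsilon> \<le> c"
  proof -
    have "(\<integral>\<^sup>+ x. ennreal \<epsilon> \<partial>\<pi>) \<le> c" unfolding c_def mean_hold_def
      by (intro nn_integral_mono) (use inner in auto)
    thus ?thesis by (simp add: P.emeasure_space_1)
  qed
  have c_fin: "c < \<infinity>"
  proof -
    let ?M = "(SUP x\<in>space \<pi>. \<integral>\<^sup>+ h. ennreal h \<partial>\<tau> x)"
    have "c \<le> (\<integral>\<^sup>+ x. ?M \<partial>\<pi>)" unfolding c_def mean_hold_def
      by (intro nn_integral_mono SUP_upper) auto
    also have "\<dots> = ?M" by (simp add: P.emeasure_space_1)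
    finally show ?thesis using assms(6) by (simp add: le_less_trans)
  qed
  obtain cr where cr: "c = ennreal cr" "cr \<ge> \<epsilon>"
    using c_ge c_fin
    by (metis ennreal_cases ennreal_le_iff infinity_ennreal_def less_irrefl order_le_less_trans assms(4) less_imp_le)
  have crpos: "cr > 0" using cr assms(4) by linarith
  have Lm: "(\<lambda>z. \<tau> (fst z (K+1))) \<in> (?P \<Otimes>\<^sub>M lborel) \<rightarrow>\<^sub>M prob_algebra borel"
  proof -
    have "(\<lambda>z. fst z (K+1)) \<in> (?P \<Otimes>\<^sub>M lborel) \<rightarrow>\<^sub>M \<pi>"
      unfolding Pi_target_def by measurable
    thus ?thesis using assms(3) by (rule measurable_compose)
  qed
  have Sm: "(SIGMA z:space (?P \<Otimes>\<^sub>M lborel). {h'. h' > snd z}) \<in> sets ((?P \<Otimes>\<^sub>M lborel) \<Otimes>\<^sub>M (borel :: real measure))"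
  proof -
    have "(SIGMA z:space (?P \<Otimes>\<^sub>M lborel). {h'. h' > snd z}) = {w \<in> space ((?P \<Otimes>\<^sub>M lborel) \<Otimes>\<^sub>M borel). snd (fst w) < (snd w::real)}"
      by (auto simp: space_pair_measure)
    also have "\<dots> \<in> sets ((?P \<Otimes>\<^sub>M lborel) \<Otimes>\<^sub>M (borel :: real measure))"
      by (rule borel_measurable_less[where f="\<lambda>w. snd (fst w)" and g=snd]) measurable
    finally show ?thesis .
  qed
  have surv_meas0: "(\<lambda>z. surv \<tau> (fst z (K+1)) (snd z)) \<in> borel_measurable (?P \<Otimes>\<^sub>M lborel)"
    unfolding surv_def by (rule measure_measurable_prob_algebra2[OF Sm Lm])
  have surv_meas[measurable]: "(\<lambda>(xs, l). ennreal (surv \<tau> (xs (K+1)) l)) \<in> borel_measurable (?P \<Otimes>\<^sub>M lborel)"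
    using surv_meas0 by (simp add: case_prod_beta')
  have main: "emeasure (A_meas \<pi> \<tau> K) (S \<times> {..<\<epsilon>}) = ennreal (measure ?P S * \<epsilon> / cr)"
    if S: "S \<in> sets ?P" for S
  proof -
    have meas: "S \<times> {..<\<epsilon>} \<in> sets (?P \<Otimes>\<^sub>M lborel)" using S by auto
    have "emeasure (A_meas \<pi> \<tau> K) (S \<times> {..<\<epsilon>}) =
       (\<integral>\<^sup>+ z. (\<lambda>(xs, l). indicator {0..} l * ennreal (surv \<tau> (xs (K+1)) l) / c) z
          * indicator (S \<times> {..<\<epsilon>}) z \<partial>(?P \<Otimes>\<^sub>M lborel))"
      unfolding A_meas_def c_def
      by (rule emeasure_density[OF _ meas]) (use surv_meas in measurable)
    also have "\<dots> = (\<integral>\<^sup>+ z. inverse c * indicator (S \<times> {0..<\<epsilon>}) z \<partial>(?P \<Otimes>\<^sub>M lborel))"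
    proof (rule nn_integral_cong)
      fix z :: "(nat \<Rightarrow> 'a) \<times> real"
      obtain xs l where zz: "z = (xs, l)" by force
      show "(\<lambda>(xs, l). indicator {0..} l * ennreal (surv \<tau> (xs (K+1)) l) / c) z
          * indicator (S \<times> {..<\<epsilon>}) z = inverse c * indicator (S \<times> {0..<\<epsilon>}) z"
      proof (cases "xs \<in> S \<and> 0 \<le> l \<and> l < \<epsilon>")
        case True
        have "xs \<in> space ?P" using True sets.sets_into_space[OF S] by auto
        hence xk: "xs (K+1) \<in> space \<pi>" unfolding Pi_target_def by (auto simp: space_PiM)
        interpret T: prob_space "\<tau> (xs (K+1))" using tx[OF xk] by blast
        have "surv \<tau> (xs (K+1)) l = 1" unfolding surv_def
        proof -
          have "measure (\<tau> (xs (K+1))) {h'. h' > l} = measure (\<tau> (xs (K+1))) {h' \<in> space (\<tau> (xs (K+1))). h' > l}"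
            using sp[OF xk] by simp
          also have "\<dots> = 1"
            apply (subst T.prob_Collect_eq_1)
            using tx[OF xk] sp[OF xk] apply simp
          proof -
            have "AE h in \<tau> (xs (K+1)). h > \<epsilon>" using assms(5) xk by blast
            thus "AE h in \<tau> (xs (K+1)). h > l" by (rule eventually_mono) (use True in auto)
          qed
          finally show "measure (\<tau> (xs (K+1))) {h'. h' > l} = 1" .
        qed
        thus ?thesis using True zz by (simp add: indicator_def divide_ennreal_def mult.commute)
      next
        case False
        thus ?thesis using zz by (auto simp: indicator_def)
      qed
    qed
    also have "\<dots> = inverse c * (emeasure ?P S * emeasure lborel {0..<\<epsilon>})"
      using S by (simp add: nn_integral_cmult_indicator lborel.emeasure_pair_measure_Times)
    also have "\<dots> = ennreal (measure ?P S * \<epsilon> / cr)"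
      using crpos assms(4) cr
      by (simp add: PP.emeasure_eq_measure inverse_ennreal ennreal_mult'' divide_real_def mult_ac)
    finally show ?thesis .
  qed
  have mainr: "measure (A_meas \<pi> \<tau> K) (S \<times> {..<\<epsilon>}) = measure ?P S * \<epsilon> / cr"
    if S: "S \<in> sets ?P" for S
    using main[OF S] crpos assms(4) by (simp add: measure_def)
  have tot: "measure (A_meas \<pi> \<tau> K) (space ?P \<times> {..<\<epsilon>}) = \<epsilon> / cr"
    using mainr[OF sets.top] by (simp add: PP.prob_space)
  show ?thesis
    using tot mainr crpos assms(4) by auto
qed

end
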